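(* Let $a,b\in\mathbb{R}$, $\lambda\in\mathbb{C}$, and $n,k\in\mathbb{N}_0$. Then $$y_{3}(n,k;\lambda;a,b)=\sum_{j=0}^{k}\sum_{m=0}^{n}\binom{n}{m}a^{m}b^{n-m}\,y_{1}(m,j;\lambda)\,S_{2}(n-m,k-j).$$
   Context: For $a,b\in\mathbb{R}$, $\lambda\in\mathbb{C}$ and $k\in\mathbb{N}_0$: the numbers $y_3(n,k;\lambda;a,b)$ are defined by $\frac{e^{bkt}}{k!}(\lambda e^{(a-b)t}+1)^{k}=\sum_{n\ge0}y_{3}(n,k;\lambda;a,b)\frac{t^{n}}{n!}$; the numbers $y_1(n,k;\lambda)$ are defined by $\frac{1}{k!}(\lambda e^{t}+1)^{k}=\sum_{n\ge0}y_{1}(n,k;\lambda)\frac{t^{n}}{n!}$; and $S_2(n,k)$ denotes the Stirling numbers of the second kind, defined by $\frac{(e^{t}-1)^{k}}{k!}=\sum_{n\ge0}S_2(n,k)\frac{t^{n}}{n!}$. Convention: $0^0=1$. *)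

theory Defs
  imports "HOL-Analysis.Analysis" "HOL-Computational_Algebra.Formal_Power_Series"
begin

text \<open>All numbers are defined through their exponential generating functions,
  realised as formal power series over the complex numbers:
  if F = sum c_n t^n/n! then c_n = n! * fps_nth F n.\<close>

definition y3 :: "nat \<Rightarrow> nat \<Rightarrow> complex \<Rightarrow> real \<Rightarrow> real \<Rightarrow> complex" where
  "y3 n k lam a b = fact n * fps_nth
     (fps_const (1 / fact k) * fps_exp (of_real b * of_nat k)
        * (fps_const lam * fps_exp (of_real (a - b)) + 1) ^ k) n"

definition y1 :: "nat \<Rightarrow> nat \<Rightarrow> complex \<Rightarrow> complex" where
  "y1 n k lam = fact n * fps_nth
     (fps_const (1 / fact k) * (fps_const lam * fps_exp 1 + 1) ^ k) n"

definition S2 :: "nat \<Rightarrow> nat \<Rightarrow> complex" where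
  "S2 n k = fact n * fps_nth (fps_const (1 / fact k) * (fps_exp 1 - 1) ^ k) n"

end

theory Submission
  imports Defs
begin

definition sc :: "complex \<Rightarrow> complex fps \<Rightarrow> complex fps" where
  "sc c F = Abs_fps (\<lambda>n. c^n * fps_nth F n)"

lemma sc_nth[simp]: "fps_nth (sc c F) n = c^n * fps_nth F n" by (simp add: sc_def)

lemma sc_mult: "sc c (F*G) = sc c F * sc c G"
proof (rule fps_ext)
  fix n
  have "fps_nth (sc c (F*G)) n = (\<Sum>i=0..n. c^i * fps_nth F i * (c^(n-i) * fps_nth G (n-i)))"
    by (simp add: fps_mult_nth sum_distrib_left) (rule sum.cong, auto simp: power_add[symmetric] mult_ac)
  thus "fps_nth (sc c (F*G)) n = fps_nth (sc c F * sc c G) n" by (simp add: fps_mult_nth)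
qed

lemma sc_add: "sc c (F+G) = sc c F + sc c G"
  by (rule fps_ext) (simp add: algebra_simps)
lemma sc_diff: "sc c (F-G) = sc c F - sc c G"
  by (rule fps_ext) (simp add: algebra_simps)
lemma sc_const: "sc c (fps_const d) = fps_const d"
  by (rule fps_ext) simp
lemma sc_one: "sc c 1 = 1"
  by (rule fps_ext) simp
lemma sc_exp: "sc c (fps_exp d) = fps_exp (c*d)"
  by (rule fps_ext) (simp add: power_mult_distrib)
lemma sc_power: "sc c (F^j) = (sc c F)^j"
  by (induction j) (simp_all add: sc_one sc_mult)

theorem mainTheorem2:
  fixes a b :: real and lam :: complex and n k :: nat
  shows "y3 n k lam a b =
    (\<Sum>j=0..k. \<Sum>m=0..n. of_nat (n choose m) * of_real a ^ m * of_real b ^ (n - m)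
        * y1 m j lam * S2 (n - m) (k - j))"
proof -
  define A :: "complex fps" where "A = fps_exp (complex_of_real a)"
  define B :: "complex fps" where "B = fps_exp (complex_of_real b)"
  define P :: "nat \<Rightarrow> complex fps" where "P j = fps_const (1 / fact j) * (fps_const lam * fps_exp 1 + 1) ^ j" for j
  define Q :: "nat \<Rightarrow> complex fps" where "Q j = fps_const (1 / fact j) * (fps_exp 1 - 1) ^ j" for j
  have PA: "sc (of_real a) (P j) = fps_const (1 / fact j) * (fps_const lam * A + 1) ^ j" for j
    by (simp add: P_def A_def sc_mult sc_const sc_power sc_add sc_exp sc_one)
  have QB: "sc (of_real b) (Q j) = fps_const (1 / fact j) * (B - 1) ^ j" for j
    by (simp add: Q_def B_def sc_mult sc_const sc_power sc_diff sc_exp sc_one)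
  have e1: "fps_exp (complex_of_real b * of_nat k) = B^k"
    by (simp add: B_def fps_exp_power_mult mult.commute)
  have e2: "fps_exp (complex_of_real (a - b)) * B = A"
    by (simp add: A_def B_def fps_exp_add_mult[symmetric])
  have F: "fps_const (1 / fact k) * fps_exp (of_real b * of_nat k)
        * (fps_const lam * fps_exp (of_real (a - b)) + 1) ^ k
        = fps_const (1 / fact k) * (fps_const lam * A + B) ^ k"
  proof -
    have "fps_exp (of_real b * of_nat k) * (fps_const lam * fps_exp (of_real (a - b)) + 1) ^ k
       = (B * (fps_const lam * fps_exp (of_real (a - b)) + 1)) ^ k"
      by (simp only: e1 power_mult_distrib)
    also have "B * (fps_const lam * fps_exp (of_real (a - b)) + 1) = fps_const lam * A + B"
      using e2 by (simp add: algebra_simps)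
    finally show ?thesis by (simp only: mult.assoc)
  qed
  also have "(fps_const lam * A + B) = (fps_const lam * A + 1) + (B - 1)" by simp
  also have "fps_const (1 / fact k) * ((fps_const lam * A + 1) + (B - 1)) ^ k
     = (\<Sum>j\<le>k. sc (of_real a) (P j) * sc (of_real b) (Q (k-j)))"
  proof -
    have "fps_const (1 / fact k) * ((fps_const lam * A + 1) + (B - 1)) ^ k
      = (\<Sum>j\<le>k. fps_const (1 / fact k) * (of_nat (k choose j) * (fps_const lam * A + 1)^j * (B-1)^(k-j)))"
      by (subst binomial_ring[of "fps_const lam * A + 1" "B - 1"]) (simp only: sum_distrib_left)
    also have "\<dots> = (\<Sum>j\<le>k. sc (of_real a) (P j) * sc (of_real b) (Q (k-j)))"
    proof (rule sum.cong[OF refl])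
      fix j assume "j \<in> {..k}"
      hence jk: "j \<le> k" by simp
      have "fps_const (1 / fact k) * of_nat (k choose j) = (fps_const (1/fact j) * fps_const (1 / fact (k-j)) :: complex fps)"
      proof -
        have "(of_nat (k choose j) :: complex) = fact k / (fact j * fact (k-j))"
          using binomial_fact[OF jk] by simp
        hence "(1 / fact k) * (of_nat (k choose j) :: complex) = (1/fact j) * (1 / fact (k-j))"
          by (simp add: field_simps)
        thus ?thesis by (metis fps_const_mult fps_of_nat)
      qed
      thus "fps_const (1 / fact k) * (of_nat (k choose j) * (fps_const lam * A + 1)^j * (B-1)^(k-j))
         = sc (of_real a) (P j) * sc (of_real b) (Q (k-j))"
        unfolding PA QB by (metis (no_types, lifting) mult.assoc mult.left_commute)
    qed
    finally show ?thesis .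
  qed
  finally have F2: "fps_const (1 / fact k) * fps_exp (of_real b * of_nat k)
        * (fps_const lam * fps_exp (of_real (a - b)) + 1) ^ k
        = (\<Sum>j\<le>k. sc (of_real a) (P j) * sc (of_real b) (Q (k-j)))" .
  have "y3 n k lam a b = (\<Sum>j\<le>k. fact n * fps_nth (sc (of_real a) (P j) * sc (of_real b) (Q (k-j))) n)"
    unfolding y3_def F2 by (simp add: fps_sum_nth sum_distrib_left)
  also have "\<dots> = (\<Sum>j=0..k. \<Sum>m=0..n. of_nat (n choose m) * of_real a ^ m * of_real b ^ (n - m)
        * y1 m j lam * S2 (n - m) (k - j))"
    unfolding atMost_atLeast0
  proof (rule sum.cong[OF refl])
    fix j
    show "fact n * fps_nth (sc (of_real a) (P j) * sc (of_real b) (Q (k-j))) n =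
      (\<Sum>m=0..n. of_nat (n choose m) * of_real a ^ m * of_real b ^ (n - m)
        * y1 m j lam * S2 (n - m) (k - j))"
      unfolding fps_mult_nth sum_distrib_left
    proof (rule sum.cong[OF refl])
      fix m assume "m \<in> {0..n}"
      hence mn: "m \<le> n" by simp
      have "(of_nat (n choose m) :: complex) = fact n / (fact m * fact (n-m))"
        using binomial_fact[OF mn] by simp
      then show "fact n * (fps_nth (sc (of_real a) (P j)) m * fps_nth (sc (of_real b) (Q (k-j))) (n-m)) =
        of_nat (n choose m) * of_real a ^ m * of_real b ^ (n - m) * y1 m j lam * S2 (n - m) (k - j)"
      proof -
        assume bn: "(of_nat (n choose m) :: complex) = fact n / (fact m * fact (n-m))"
        have y: "y1 m j lam = fact m * fps_nth (P j) m" by (simp add: y1_def P_def)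
        have s: "S2 (n-m) (k-j) = fact (n-m) * fps_nth (Q (k-j)) (n-m)" by (simp add: S2_def Q_def)
        show ?thesis unfolding y s bn sc_nth by (simp add: field_simps)
      qed
    qed
  qed
  finally show ?thesis .
qed

end
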